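(* Let $X$ be a finite group with a normal subgroup $N$ and a complement $G$ to $N$ in $X$ (so $X=N{:}G$), and let $Y\leq X$ be core-free such that the transitive permutation group $X$ acting on the right cosets of $Y$ is elusive. Identify $G$ with $X/N$ via the quotient map, and let $H$ be the subgroup of $G$ corresponding to $YN/N$. Suppose $H$ is core-free in $G$. Then $G$, acting transitively on the right cosets of $H$, is elusive.
   Context: A derangement is a permutation with no fixed points. A transitive permutation group is elusive if it contains no derangements of prime order. *)

theory Defs
  imports "HOL-Algebra.Algebra" "HOL-Computational_Algebra.Primes"
begin

definition core :: "('a, 'b) monoid_scheme \<Rightarrow> 'a set \<Rightarrow> 'a set" where
  "core G H = (\<Inter>g\<in>carrier G. (g <#\<^bsub>G\<^esub> H) #>\<^bsub>G\<^esub> inv\<^bsub>G\<^esub> g)"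

definition core_free :: "('a, 'b) monoid_scheme \<Rightarrow> 'a set \<Rightarrow> bool" where
  "core_free G H \<longleftrightarrow> core G H = {\<one>\<^bsub>G\<^esub>}"

definition coset_perm :: "('a, 'b) monoid_scheme \<Rightarrow> 'a set \<Rightarrow> 'a \<Rightarrow> 'a set \<Rightarrow> 'a set" where
  "coset_perm G H x = (\<lambda>C \<in> rcosets\<^bsub>G\<^esub> H. C #>\<^bsub>G\<^esub> x)"

definition coset_perm_group :: "('a, 'b) monoid_scheme \<Rightarrow> 'a set \<Rightarrow> ('a set \<Rightarrow> 'a set) set" where
  "coset_perm_group G H = coset_perm G H ` carrier G"

definition derangement :: "'c set \<Rightarrow> ('c \<Rightarrow> 'c) \<Rightarrow> bool" where
  "derangement S \<sigma> \<longleftrightarrow> (\<forall>x\<in>S. \<sigma> x \<noteq> x)"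

definition elusive_coset_action :: "('a, 'b) monoid_scheme \<Rightarrow> 'a set \<Rightarrow> bool" where
  "elusive_coset_action G H \<longleftrightarrow>
     (\<forall>\<sigma>\<in>coset_perm_group G H.
        Factorial_Ring.prime (group.ord (BijGroup (rcosets\<^bsub>G\<^esub> H)) \<sigma>) \<longrightarrow>
        \<not> derangement (rcosets\<^bsub>G\<^esub> H) \<sigma>)"

end

theory Submission
  imports Defs "HOL-Algebra.SndIsomorphismGrp"
begin

lemma r_coset_upd: "r_coset (G\<lparr>carrier := A\<rparr>) = r_coset G"
  by (auto simp: r_coset_def fun_eq_iff)

lemma l_coset_upd: "l_coset (G\<lparr>carrier := A\<rparr>) = l_coset G"
  by (auto simp: l_coset_def fun_eq_iff)

lemma rcosets_upd: "rcosets\<^bsub>G\<lparr>carrier := A\<rparr>\<^esub> H = (\<Union>a\<in>A. {H #>\<^bsub>G\<^esub> a})"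
  by (simp add: RCOSETS_def r_coset_upd)

lemma (in group) rcosets_obtain:
  assumes "C \<in> rcosets H"
  obtains a where "a \<in> carrier G" "C = H #> a"
  using assms unfolding RCOSETS_def by blast

lemma (in group) coset_perm_Bij:
  assumes "subgroup H G" "x \<in> carrier G"
  shows "coset_perm G H x \<in> Bij (rcosets H)"
proof -
  have sub: "H \<subseteq> carrier G" using assms(1) subgroup.subset by blast
  have maps: "C #> y \<in> rcosets H" if C: "C \<in> rcosets H" and y: "y \<in> carrier G" for C y
  proof -
    obtain a where a: "a \<in> carrier G" "C = H #> a" using C by (rule rcosets_obtain)
    have "C #> y = H #> (a \<otimes> y)" using a sub y coset_mult_assoc by simp
    moreover have "a \<otimes> y \<in> carrier G" using a y by simp
    ultimately show ?thesis using rcosetsI[OF sub] by simp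
  qed
  have bk: "C #> y #> inv y = C \<and> C #> inv y #> y = C"
    if C: "C \<in> rcosets H" and y: "y \<in> carrier G" for C y
  proof -
    obtain a where a: "a \<in> carrier G" "C = H #> a" using C by (rule rcosets_obtain)
    have C': "C \<subseteq> carrier G" using a sub r_coset_subset_G by blast
    have "C #> y #> inv y = C" using coset_mult_assoc[OF C' y] y C' by simp
    moreover have "C #> inv y #> y = C" using coset_mult_assoc[OF C', of "inv y" y] y C' by simp
    ultimately show ?thesis by blast
  qed
  have "bij_betw (\<lambda>C. C #> x) (rcosets H) (rcosets H)"
  proof (rule bij_betwI[where g = "\<lambda>C. C #> inv x"])
    show "(\<lambda>C. C #> x) \<in> rcosets H \<rightarrow> rcosets H" using maps assms(2) by blast
    show "(\<lambda>C. C #> inv x) \<in> rcosets H \<rightarrow> rcosets H" using maps assms(2) by simp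
  qed (use bk assms(2) in auto)
  then have "bij_betw (coset_perm G H x) (rcosets H) (rcosets H)"
    unfolding coset_perm_def using bij_betw_restrict_eq by blast
  then show ?thesis unfolding Bij_def coset_perm_def by simp
qed

lemma (in group) coset_perm_pow:
  assumes "subgroup H G" "x \<in> carrier G"
  shows "coset_perm G H x [^]\<^bsub>BijGroup (rcosets H)\<^esub> (n::nat) = coset_perm G H (x [^] n)"
proof (induction n)
  case 0
  have eq: "C #> \<one> = C" if C: "C \<in> rcosets H" for C
  proof -
    obtain a where a: "a \<in> carrier G" "C = H #> a" using C by (rule rcosets_obtain)
    have "C \<subseteq> carrier G" using a assms(1) subgroup.subset r_coset_subset_G by blast
    then show ?thesis by simp
  qed
  have "coset_perm G H x [^]\<^bsub>BijGroup (rcosets H)\<^esub> (0::nat) = (\<lambda>C\<in>rcosets H. C)"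
    by (simp add: BijGroup_def)
  also have "\<dots> = coset_perm G H (x [^] (0::nat))"
    unfolding coset_perm_def using eq by (intro restrict_ext) simp
  finally show ?case .
next
  case (Suc n)
  have B1: "coset_perm G H (x [^] n) \<in> Bij (rcosets H)"
    using coset_perm_Bij assms by simp
  have B2: "coset_perm G H x \<in> Bij (rcosets H)"
    using coset_perm_Bij assms by simp
  have eq: "C #> x #> x [^] n = C #> x [^] Suc n" if C: "C \<in> rcosets H" for C
  proof -
    obtain a where a: "a \<in> carrier G" "C = H #> a" using C by (rule rcosets_obtain)
    have C': "C \<subseteq> carrier G" using a assms(1) subgroup.subset r_coset_subset_G by blast
    have "C #> x #> x [^] n = C #> (x \<otimes> x [^] n)"
      using coset_mult_assoc[OF C' assms(2), of "x [^] n"] assms(2) by simp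
    also have "x \<otimes> x [^] n = x [^] Suc n" using nat_pow_Suc2[of x n] assms(2) by simp
    finally show ?thesis .
  qed
  have mapsx: "C #> x \<in> rcosets H" if C: "C \<in> rcosets H" for C
  proof -
    have "coset_perm G H x C \<in> rcosets H" using B2 C Bij_imp_funcset by blast
    then show ?thesis using C unfolding coset_perm_def by simp
  qed
  have "coset_perm G H x [^]\<^bsub>BijGroup (rcosets H)\<^esub> Suc n
      = coset_perm G H x [^]\<^bsub>BijGroup (rcosets H)\<^esub> n \<otimes>\<^bsub>BijGroup (rcosets H)\<^esub> coset_perm G H x"
    by (rule monoid.nat_pow_Suc[OF group.is_monoid[OF group_BijGroup]])
  also have "\<dots> = coset_perm G H (x [^] n) \<otimes>\<^bsub>BijGroup (rcosets H)\<^esub> coset_perm G H x"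
    using Suc by simp
  also have "\<dots> = compose (rcosets H) (coset_perm G H (x [^] n)) (coset_perm G H x)"
    using B1 B2 by (simp add: BijGroup_def)
  also have "\<dots> = coset_perm G H (x [^] Suc n)"
    unfolding compose_def coset_perm_def[of G H "x [^] Suc n"]
  proof (intro restrict_ext)
    fix C assume C: "C \<in> rcosets H"
    show "coset_perm G H (x [^] n) (coset_perm G H x C) = C #> x [^] Suc n"
      using C mapsx[OF C] eq[OF C] unfolding coset_perm_def by simp
  qed
  finally show ?case .
qed

lemma (in group) conj_back:
  assumes "a \<in> carrier G" "b \<in> carrier G"
  shows "a \<otimes> (inv a \<otimes> b \<otimes> a) \<otimes> inv a = b"
  using assms by (simp add: m_assoc[symmetric]) (simp add: m_assoc)

lemma (in group) conj_aux1:
  assumes "y \<in> carrier G" "n \<in> carrier G"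
  shows "y \<otimes> (inv y \<otimes> inv n \<otimes> y \<otimes> n) = inv n \<otimes> y \<otimes> n"
  using assms by (simp add: m_assoc[symmetric])

lemma (in group) conj_aux2:
  assumes "c \<in> carrier G" "n \<in> carrier G" "g \<in> carrier G"
  shows "inv n \<otimes> ((n \<otimes> c) \<otimes> g \<otimes> inv (n \<otimes> c)) \<otimes> n = c \<otimes> g \<otimes> inv c"
  using assms by (simp add: m_assoc[symmetric] inv_mult_group) (simp add: m_assoc)

theorem lemma5p4:
  fixes XG :: "('a, 'b) monoid_scheme"
    and N G Y :: "'a set"
  assumes "group XG"
    and "finite (carrier XG)"
    and "normal N XG"
    and "subgroup G XG"
    and "N \<inter> G = {\<one>\<^bsub>XG\<^esub>}"
    and "N <#>\<^bsub>XG\<^esub> G = carrier XG"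
    and "subgroup Y XG"
    and "core_free XG Y"
    and "elusive_coset_action XG Y"
    and "core_free (XG\<lparr>carrier := G\<rparr>) ((Y <#>\<^bsub>XG\<^esub> N) \<inter> G)"
  shows "elusive_coset_action (XG\<lparr>carrier := G\<rparr>) ((Y <#>\<^bsub>XG\<^esub> N) \<inter> G)"
proof -
  interpret X: group XG by fact
  let ?G' = "XG\<lparr>carrier := G\<rparr>"
  let ?H = "(Y <#>\<^bsub>XG\<^esub> N) \<inter> G"
  have grpG: "group ?G'" using X.subgroup_imp_group assms(4) by blast
  interpret GG: group ?G' by (rule grpG)
  have YN: "subgroup (Y <#>\<^bsub>XG\<^esub> N) XG"
  proof -
    have "Y <#>\<^bsub>XG\<^esub> N = N <#>\<^bsub>XG\<^esub> Y"
      using X.commut_normal assms(3,7) by blast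
    moreover have "subgroup (N <#>\<^bsub>XG\<^esub> Y) XG"
      using second_isomorphism_grp.normal_set_mult_subgroup[of N XG Y] assms(3,7)
      unfolding second_isomorphism_grp_def second_isomorphism_grp_axioms_def by blast
    ultimately show ?thesis by simp
  qed
  have HX: "subgroup ?H XG" using X.subgroups_Inter_pair YN assms(4) by blast
  have HG: "subgroup ?H ?G'" using X.subgroup_incl HX assms(4) by blast
  have Gsub: "G \<subseteq> carrier XG" using assms(4) subgroup.subset by blast
  have Hsub: "?H \<subseteq> carrier XG" using HX subgroup.subset by blast
  have Ysub: "Y \<subseteq> carrier XG" using assms(7) subgroup.subset by blast
  have Nsg: "subgroup N XG" using assms(3) normal_imp_subgroup by blast
  show ?thesis unfolding elusive_coset_action_def
  proof (intro ballI impI notI)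
    fix \<sigma>
    assume s1: "\<sigma> \<in> coset_perm_group ?G' ?H"
      and s2: "Factorial_Ring.prime (group.ord (BijGroup (rcosets\<^bsub>?G'\<^esub> ?H)) \<sigma>)"
      and s3: "derangement (rcosets\<^bsub>?G'\<^esub> ?H) \<sigma>"
    interpret B': group "BijGroup (rcosets\<^bsub>?G'\<^esub> ?H)" by (rule group_BijGroup)
    interpret B: group "BijGroup (rcosets\<^bsub>XG\<^esub> Y)" by (rule group_BijGroup)
    define p where "p = B'.ord \<sigma>"
    have pp: "Factorial_Ring.prime p" using s2 p_def by simp
    obtain g where g: "g \<in> G" "\<sigma> = coset_perm ?G' ?H g"
      using s1 unfolding coset_perm_group_def by auto
    have gX: "g \<in> carrier XG" using g Gsub by blast
    have sB: "\<sigma> \<in> carrier (BijGroup (rcosets\<^bsub>?G'\<^esub> ?H))"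
      using GG.coset_perm_Bij[OF HG] g by (simp add: BijGroup_def)
    have "\<sigma> [^]\<^bsub>BijGroup (rcosets\<^bsub>?G'\<^esub> ?H)\<^esub> p = \<one>\<^bsub>BijGroup (rcosets\<^bsub>?G'\<^esub> ?H)\<^esub>"
      unfolding p_def using sB by (rule B'.pow_ord_eq_1)
    then have pw: "coset_perm ?G' ?H (g [^]\<^bsub>?G'\<^esub> p) = \<one>\<^bsub>BijGroup (rcosets\<^bsub>?G'\<^esub> ?H)\<^esub>"
      using GG.coset_perm_pow[OF HG, of g p] g by simp
    define gp where "gp = g [^]\<^bsub>XG\<^esub> p"
    have gpeq: "g [^]\<^bsub>?G'\<^esub> p = gp" unfolding gp_def
      using X.nat_pow_consistent[of g p G] by simp
    have gpG: "gp \<in> G" using gpeq[symmetric] GG.nat_pow_closed[of g p] g(1) by simp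
    have gpX: "gp \<in> carrier XG" using gpG Gsub by blast
    have gpcore: "gp \<in> core ?G' ?H"
      unfolding core_def
    proof (rule INT_I)
      fix c assume c: "c \<in> carrier ?G'"
      then have cG: "c \<in> G" by simp
      have cX: "c \<in> carrier XG" using cG Gsub by blast
      have icG: "inv\<^bsub>XG\<^esub> c \<in> G" using subgroup.m_inv_closed[OF assms(4) cG] by simp
      have icX: "inv\<^bsub>XG\<^esub> c \<in> carrier XG" using cX by simp
      have inv': "inv\<^bsub>?G'\<^esub> c = inv\<^bsub>XG\<^esub> c" using X.m_inv_consistent[OF assms(4) cG] .
      have Cin: "?H #>\<^bsub>XG\<^esub> inv\<^bsub>XG\<^esub> c \<in> rcosets\<^bsub>?G'\<^esub> ?H"
        using icG by (auto simp: rcosets_upd)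
      have "coset_perm ?G' ?H gp (?H #>\<^bsub>XG\<^esub> inv\<^bsub>XG\<^esub> c) = ?H #>\<^bsub>XG\<^esub> inv\<^bsub>XG\<^esub> c"
        using pw gpeq Cin by (simp add: BijGroup_def)
      then have "?H #>\<^bsub>XG\<^esub> inv\<^bsub>XG\<^esub> c #>\<^bsub>XG\<^esub> gp = ?H #>\<^bsub>XG\<^esub> inv\<^bsub>XG\<^esub> c"
        using Cin by (simp add: coset_perm_def r_coset_upd)
      then have "?H #>\<^bsub>XG\<^esub> (inv\<^bsub>XG\<^esub> c \<otimes>\<^bsub>XG\<^esub> gp) = ?H #>\<^bsub>XG\<^esub> inv\<^bsub>XG\<^esub> c"
        using X.coset_mult_assoc[OF Hsub icX gpX] by simp
      then have "inv\<^bsub>XG\<^esub> c \<otimes>\<^bsub>XG\<^esub> gp \<in> ?H #>\<^bsub>XG\<^esub> inv\<^bsub>XG\<^esub> c"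
        using X.rcos_self[OF _ HX, of "inv\<^bsub>XG\<^esub> c \<otimes>\<^bsub>XG\<^esub> gp"] icX gpX by simp
      then have hH: "inv\<^bsub>XG\<^esub> c \<otimes>\<^bsub>XG\<^esub> gp \<otimes>\<^bsub>XG\<^esub> c \<in> ?H"
        using subgroup.rcos_module_imp[OF HX assms(1) icX] cX by simp
      define h where "h = inv\<^bsub>XG\<^esub> c \<otimes>\<^bsub>XG\<^esub> gp \<otimes>\<^bsub>XG\<^esub> c"
      have hH': "h \<in> ?H" using hH h_def by simp
      have eqgp: "c \<otimes>\<^bsub>XG\<^esub> h \<otimes>\<^bsub>XG\<^esub> inv\<^bsub>XG\<^esub> c = gp"
        unfolding h_def using X.conj_back[OF cX gpX] .
      have m1: "c \<otimes>\<^bsub>XG\<^esub> h \<in> c <#\<^bsub>XG\<^esub> ?H" unfolding l_coset_def using hH' by blast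
      have "c \<otimes>\<^bsub>XG\<^esub> h \<otimes>\<^bsub>XG\<^esub> inv\<^bsub>XG\<^esub> c \<in> (c <#\<^bsub>XG\<^esub> ?H) #>\<^bsub>XG\<^esub> inv\<^bsub>XG\<^esub> c"
        unfolding r_coset_def using m1 by blast
      then show "gp \<in> (c <#\<^bsub>?G'\<^esub> ?H) #>\<^bsub>?G'\<^esub> inv\<^bsub>?G'\<^esub> c"
        unfolding inv' r_coset_upd l_coset_upd eqgp .
    qed
    have gp1: "gp = \<one>\<^bsub>XG\<^esub>"
    proof -
      have "core ?G' ?H = {\<one>\<^bsub>XG\<^esub>}" using assms(10) unfolding core_free_def by simp
      then show ?thesis using gpcore by blast
    qed
    define \<tau> where "\<tau> = coset_perm XG Y g"
    have tB: "\<tau> \<in> carrier (BijGroup (rcosets\<^bsub>XG\<^esub> Y))"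
      using X.coset_perm_Bij[OF assms(7) gX] unfolding \<tau>_def by (simp add: BijGroup_def)
    have "\<tau> [^]\<^bsub>BijGroup (rcosets\<^bsub>XG\<^esub> Y)\<^esub> p = coset_perm XG Y (g [^]\<^bsub>XG\<^esub> (0::nat))"
      unfolding \<tau>_def using X.coset_perm_pow[OF assms(7) gX, of p] gp1 gp_def by simp
    also have "\<dots> = \<one>\<^bsub>BijGroup (rcosets\<^bsub>XG\<^esub> Y)\<^esub>"
      using X.coset_perm_pow[OF assms(7) gX, of 0] by simp
    finally have "B.ord \<tau> dvd p" using B.pow_eq_id[OF tB] by simp
    then have ordcases: "B.ord \<tau> = 1 \<or> B.ord \<tau> = p" using pp
      by (simp add: prime_nat_iff)
    have der: "derangement (rcosets\<^bsub>XG\<^esub> Y) \<tau>"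
      unfolding derangement_def
    proof
      fix C assume C: "C \<in> rcosets\<^bsub>XG\<^esub> Y"
      then obtain x where x: "x \<in> carrier XG" "C = Y #>\<^bsub>XG\<^esub> x"
        by (rule X.rcosets_obtain)
      show "\<tau> C \<noteq> C"
      proof
        assume "\<tau> C = C"
        then have "Y #>\<^bsub>XG\<^esub> x #>\<^bsub>XG\<^esub> g = Y #>\<^bsub>XG\<^esub> x"
          using C x unfolding \<tau>_def coset_perm_def by simp
        then have "Y #>\<^bsub>XG\<^esub> (x \<otimes>\<^bsub>XG\<^esub> g) = Y #>\<^bsub>XG\<^esub> x"
          using X.coset_mult_assoc[OF Ysub x(1) gX] by simp
        then have "x \<otimes>\<^bsub>XG\<^esub> g \<in> Y #>\<^bsub>XG\<^esub> x"
          using X.rcos_self[OF _ assms(7), of "x \<otimes>\<^bsub>XG\<^esub> g"] x gX by simp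
        then have yY: "x \<otimes>\<^bsub>XG\<^esub> g \<otimes>\<^bsub>XG\<^esub> inv\<^bsub>XG\<^esub> x \<in> Y"
          using subgroup.rcos_module_imp[OF assms(7) assms(1) x(1)] by simp
        define y where "y = x \<otimes>\<^bsub>XG\<^esub> g \<otimes>\<^bsub>XG\<^esub> inv\<^bsub>XG\<^esub> x"
        have yX: "y \<in> carrier XG" using yY Ysub y_def by blast
        obtain n c where nc: "n \<in> N" "c \<in> G" "x = n \<otimes>\<^bsub>XG\<^esub> c"
          using x(1) assms(6) unfolding set_mult_def by blast
        have nX: "n \<in> carrier XG" using nc Nsg subgroup.subset by blast
        have cX: "c \<in> carrier XG" using nc Gsub by blast
        have m1: "inv\<^bsub>XG\<^esub> y \<otimes>\<^bsub>XG\<^esub> inv\<^bsub>XG\<^esub> n \<otimes>\<^bsub>XG\<^esub> y \<in> N"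
          using normal.inv_op_closed1[OF assms(3) yX] subgroup.m_inv_closed[OF Nsg nc(1)] by blast
        have m2: "inv\<^bsub>XG\<^esub> y \<otimes>\<^bsub>XG\<^esub> inv\<^bsub>XG\<^esub> n \<otimes>\<^bsub>XG\<^esub> y \<otimes>\<^bsub>XG\<^esub> n \<in> N"
          using subgroup.m_closed[OF Nsg m1 nc(1)] .
        have "y \<otimes>\<^bsub>XG\<^esub> (inv\<^bsub>XG\<^esub> y \<otimes>\<^bsub>XG\<^esub> inv\<^bsub>XG\<^esub> n \<otimes>\<^bsub>XG\<^esub> y \<otimes>\<^bsub>XG\<^esub> n) = c \<otimes>\<^bsub>XG\<^esub> g \<otimes>\<^bsub>XG\<^esub> inv\<^bsub>XG\<^esub> c"
          using X.conj_aux1[OF yX nX] X.conj_aux2[OF cX nX gX] y_def nc(3) by simp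
        moreover have "y \<otimes>\<^bsub>XG\<^esub> (inv\<^bsub>XG\<^esub> y \<otimes>\<^bsub>XG\<^esub> inv\<^bsub>XG\<^esub> n \<otimes>\<^bsub>XG\<^esub> y \<otimes>\<^bsub>XG\<^esub> n) \<in> Y <#>\<^bsub>XG\<^esub> N"
          using yY m2 y_def unfolding set_mult_def by blast
        moreover have "c \<otimes>\<^bsub>XG\<^esub> g \<otimes>\<^bsub>XG\<^esub> inv\<^bsub>XG\<^esub> c \<in> G"
          using nc(2) g(1) assms(4) by (simp add: subgroup.m_closed subgroup.m_inv_closed)
        ultimately have cgH: "c \<otimes>\<^bsub>XG\<^esub> g \<otimes>\<^bsub>XG\<^esub> inv\<^bsub>XG\<^esub> c \<in> ?H" by simp
        have "c \<otimes>\<^bsub>XG\<^esub> g \<in> ?H #>\<^bsub>XG\<^esub> c"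
          using subgroup.rcos_module_rev[OF HX assms(1) cX _ cgH] cX gX by simp
        then have eqc: "?H #>\<^bsub>XG\<^esub> c = ?H #>\<^bsub>XG\<^esub> (c \<otimes>\<^bsub>XG\<^esub> g)"
          using X.repr_independence[OF _ cX HX] by blast
        have Hc: "?H #>\<^bsub>XG\<^esub> c \<in> rcosets\<^bsub>?G'\<^esub> ?H"
          using nc(2) by (auto simp: rcosets_upd)
        have "\<sigma> (?H #>\<^bsub>XG\<^esub> c) = ?H #>\<^bsub>XG\<^esub> c #>\<^bsub>XG\<^esub> g"
          using Hc g(2) by (simp add: coset_perm_def r_coset_upd)
        also have "\<dots> = ?H #>\<^bsub>XG\<^esub> c"
          using X.coset_mult_assoc[OF Hsub cX gX] eqc by simp
        finally show False using s3 Hc unfolding derangement_def by blast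
      qed
    qed
    have Yin: "Y \<in> rcosets\<^bsub>XG\<^esub> Y"
      using X.rcosetsI[OF Ysub X.one_closed] X.coset_mult_one[OF Ysub] by simp
    have "B.ord \<tau> \<noteq> 1"
    proof
      assume "B.ord \<tau> = 1"
      then have "\<tau> = \<one>\<^bsub>BijGroup (rcosets\<^bsub>XG\<^esub> Y)\<^esub>" using B.ord_eq_1[OF tB] by simp
      then have "\<tau> Y = Y" using Yin by (simp add: BijGroup_def)
      then show False using der Yin unfolding derangement_def by blast
    qed
    then have "B.ord \<tau> = p" using ordcases by blast
    moreover have "\<tau> \<in> coset_perm_group XG Y" unfolding \<tau>_def coset_perm_group_def using gX by blast
    ultimately show False using assms(9) der pp unfolding elusive_coset_action_def by auto
  qed
qed

end
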